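(* Let $k\leq n$ be positive integers. Suppose that for every $v\in\mathbb{R}^n$ with pairwise distinct coordinates not summing to $0$, and every hyperplane $H\subset\mathbb{R}^n$ through the origin, $|H\cap S_nv|\leq n!/k$. Then for every $m\geq n$, every $v\in\mathbb{R}^m$ with pairwise distinct coordinates not summing to $0$, and every hyperplane $H\subset\mathbb{R}^m$ through the origin, $|H\cap S_mv|\leq m!/k$. In particular, if $n\geq 3$ is odd and $\max_{v,H}|H\cap S_nv|=(n-1)!$ (maximum over $v\in\mathbb{R}^n$ with distinct coordinates not summing to $0$ and hyperplanes $H$ through the origin), then $\max_{v,H}|H\cap S_{n+1}v|=(n+1)(n-1)!$ (maximum over $v\in\mathbb{R}^{n+1}$ with distinct coordinates not summing to $0$ and hyperplanes $H\subset\mathbb{R}^{n+1}$ through the origin).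
   Context: The symmetric group $S_n$ acts on $\mathbb{R}^n$ by permuting coordinates; $S_nv$ denotes the orbit of $v$. *)

theory Defs
  imports "HOL-Combinatorics.Permutations" Complex_Main
begin

text \<open>Vectors in R^n are represented as functions nat => real; only the
  coordinates 0..n-1 are relevant.\<close>

definition admissible :: "nat \<Rightarrow> (nat \<Rightarrow> real) \<Rightarrow> bool" where
  "admissible n v \<longleftrightarrow> inj_on v {..<n} \<and> (\<Sum>i<n. v i) \<noteq> 0"

definition orbit :: "nat \<Rightarrow> (nat \<Rightarrow> real) \<Rightarrow> (nat \<Rightarrow> real) set" where
  "orbit n v = {(\<lambda>i. v (\<sigma> i)) | \<sigma>. \<sigma> permutes {..<n}}"

definition hyperplane :: "nat \<Rightarrow> (nat \<Rightarrow> real) \<Rightarrow> (nat \<Rightarrow> real) set" where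
  "hyperplane n a = {x. (\<Sum>i<n. a i * x i) = 0}"

definition nonzero_normal :: "nat \<Rightarrow> (nat \<Rightarrow> real) \<Rightarrow> bool" where
  "nonzero_normal n a \<longleftrightarrow> (\<exists>i<n. a i \<noteq> 0)"

definition orbit_bound :: "nat \<Rightarrow> nat \<Rightarrow> bool" where
  "orbit_bound n k \<longleftrightarrow> (\<forall>v a. admissible n v \<and> nonzero_normal n a \<longrightarrow>
      real (card (hyperplane n a \<inter> orbit n v)) \<le> fact n / real k)"

definition max_hit :: "nat \<Rightarrow> nat" where
  "max_hit n = Max {card (hyperplane n a \<inter> orbit n v) | v a.
      admissible n v \<and> nonzero_normal n a}"

end

theory Submission
  imports Defs
begin

lemma orbit_image: "orbit n v = (\<lambda>\<sigma> i. v (\<sigma> i)) ` {\<sigma>. \<sigma> permutes {..<n}}"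
  unfolding orbit_def by auto

lemma orbit_finite: "finite (orbit n v)"
  unfolding orbit_image by (simp add: finite_permutations)

lemma orbit_card: "card (orbit n v) \<le> fact n"
proof -
  have "card (orbit n v) \<le> card {\<sigma>. \<sigma> permutes {..<n}}"
    unfolding orbit_image by (rule card_image_le) (simp add: finite_permutations)
  also have "\<dots> = fact n" by (simp add: card_permutations)
  finally show ?thesis .
qed

lemma orbit_sum: assumes "x \<in> orbit n v" shows "(\<Sum>i<n. x i) = (\<Sum>i<n. v i)"
proof -
  obtain \<sigma> where s: "\<sigma> permutes {..<n}" "x = (\<lambda>i. v (\<sigma> i))" using assms unfolding orbit_def by auto
  show ?thesis using sum.permute[OF s(1), of v] s(2) by (simp add: comp_def)
qed

lemma orbit_compose: assumes "x \<in> orbit n v" "\<pi> permutes {..<n}" shows "x \<circ> \<pi> \<in> orbit n v"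
proof -
  obtain \<sigma> where s: "\<sigma> permutes {..<n}" "x = (\<lambda>i. v (\<sigma> i))" using assms unfolding orbit_def by auto
  have "\<sigma> \<circ> \<pi> permutes {..<n}" using permutes_compose[OF assms(2) s(1)] .
  then show ?thesis unfolding orbit_def using s(2) by (auto simp: comp_def intro!: exI[of _ "\<sigma> \<circ> \<pi>"])
qed

lemma card_perm_normal:
  assumes "\<pi> permutes {..<n}"
  shows "card (hyperplane n a \<inter> orbit n v) \<le> card (hyperplane n (a \<circ> \<pi>) \<inter> orbit n v)"
proof -
  have inj: "inj_on (\<lambda>x. x \<circ> \<pi>) (hyperplane n a \<inter> orbit n v)"
  proof (rule inj_onI)
    fix x y assume "x \<circ> \<pi> = y \<circ> \<pi>"
    then have "x (\<pi> (inv \<pi> i)) = y (\<pi> (inv \<pi> i))" for i by (metis comp_apply)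
    then show "x = y" by (simp add: permutes_inverses[OF assms] fun_eq_iff)
  qed
  have sub: "(\<lambda>x. x \<circ> \<pi>) ` (hyperplane n a \<inter> orbit n v) \<subseteq> hyperplane n (a \<circ> \<pi>) \<inter> orbit n v"
  proof safe
    fix x assume h: "x \<in> hyperplane n a" and o: "x \<in> orbit n v"
    show "x \<circ> \<pi> \<in> orbit n v" using orbit_compose[OF o assms] .
    have "(\<Sum>i<n. (a \<circ> \<pi>) i * (x \<circ> \<pi>) i) = (\<Sum>i<n. a i * x i)"
      using sum.permute[OF assms, of "\<lambda>i. a i * x i"] by (simp add: comp_def)
    then show "x \<circ> \<pi> \<in> hyperplane n (a \<circ> \<pi>)" using h unfolding hyperplane_def by simp
  qed
  have "card (hyperplane n a \<inter> orbit n v) = card ((\<lambda>x. x \<circ> \<pi>) ` (hyperplane n a \<inter> orbit n v))"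
    using inj by (simp add: card_image)
  also have "\<dots> \<le> card (hyperplane n (a \<circ> \<pi>) \<inter> orbit n v)"
    by (rule card_mono[OF _ sub]) (simp add: orbit_finite)
  finally show ?thesis .
qed


lemma affine_bound:
  assumes ob: "orbit_bound m k" and inj: "inj_on y {..<m}"
    and ij: "i < m" "j < m" "a i \<noteq> a j"
  shows "real (card {x \<in> orbit m y. (\<Sum>i<m. a i * x i) = e}) \<le> fact m / real k"
proof -
  define S where "S = (\<Sum>i<m. y i)"
  define s :: real where "s = (if S = 0 then 1 else 0)"
  define y' where "y' = (\<lambda>i. y i + s)"
  define T where "T = (\<Sum>i<m. y' i)"
  have m0: "m > 0" using ij by auto
  have T: "T = S + real m * s" unfolding T_def y'_def S_def by (simp add: sum.distrib)
  have T0: "T \<noteq> 0" unfolding T s_def using m0 by auto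
  define A where "A = (\<Sum>i<m. a i)"
  define c where "c = (e + s * A) / T"
  define a' where "a' = (\<lambda>i. a i - c)"
  have adm: "admissible m y'" unfolding admissible_def
    using inj T0 unfolding T_def y'_def inj_on_def by auto
  have nz: "nonzero_normal m a'" unfolding nonzero_normal_def a'_def
    using ij by (metis eq_iff_diff_eq_0)
  have bnd: "real (card (hyperplane m a' \<inter> orbit m y')) \<le> fact m / real k"
    using ob adm nz unfolding orbit_bound_def by blast
  define f where "f = (\<lambda>(x::nat\<Rightarrow>real) i. x i + s)"
  have injf: "inj_on f X" for X unfolding f_def inj_on_def fun_eq_iff by auto
  have sub: "f ` {x \<in> orbit m y. (\<Sum>i<m. a i * x i) = e} \<subseteq> hyperplane m a' \<inter> orbit m y'"
  proof (rule image_subsetI)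
    fix x assume xin: "x \<in> {x \<in> orbit m y. (\<Sum>i<m. a i * x i) = e}"
    then have o: "x \<in> orbit m y" and h: "(\<Sum>i<m. a i * x i) = e" by auto
    obtain \<sigma> where sg: "\<sigma> permutes {..<m}" "x = (\<lambda>i. y (\<sigma> i))" using o unfolding orbit_def by auto
    have o1: "f x \<in> orbit m y'" unfolding orbit_def f_def y'_def using sg by auto
    have sx: "(\<Sum>i<m. x i) = S" using orbit_sum[OF o] S_def by simp
    have "(\<Sum>i<m. a' i * f x i) = (\<Sum>i<m. a i * x i) + s * A - c * ((\<Sum>i<m. x i) + real m * s)"
      unfolding a'_def f_def A_def by (simp add: algebra_simps sum.distrib sum_subtractf sum_distrib_left)
    also have "\<dots> = 0" unfolding h sx T[symmetric] c_def using T0 by simp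
    finally show "f x \<in> hyperplane m a' \<inter> orbit m y'" using o1 unfolding hyperplane_def by simp
  qed
  have "card {x \<in> orbit m y. (\<Sum>i<m. a i * x i) = e} = card (f ` {x \<in> orbit m y. (\<Sum>i<m. a i * x i) = e})"
    using injf by (simp add: card_image)
  also have "\<dots> \<le> card (hyperplane m a' \<inter> orbit m y')"
    by (rule card_mono[OF _ sub]) (simp add: orbit_finite)
  finally show ?thesis using bnd by linarith
qed

lemma fiber:
  assumes "x \<in> orbit (Suc m) v"
  shows "\<exists>j<Suc m. x \<in> orbit m (v \<circ> transpose j m) \<and> x m = v j"
proof -
  obtain \<sigma> where s: "\<sigma> permutes {..<Suc m}" "x = (\<lambda>i. v (\<sigma> i))" using assms unfolding orbit_def by auto
  define j where "j = \<sigma> m"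
  have j: "j < Suc m" unfolding j_def using permutes_in_image[OF s(1)] by auto
  define \<tau> where "\<tau> = transpose j m \<circ> \<sigma>"
  have t1: "\<tau> permutes {..<Suc m}" unfolding \<tau>_def
    by (rule permutes_compose[OF s(1)]) (rule permutes_swap_id, use j in auto)
  have tm: "\<tau> m = m" unfolding \<tau>_def j_def by simp
  have t2: "\<tau> permutes {..<m}"
  proof -
    have "\<forall>y. \<exists>!x. \<tau> x = y" using t1 unfolding permutes_def by blast
    moreover have "\<tau> x = x" if "x \<notin> {..<m}" for x
      using that tm permutes_not_in[OF t1, of x] by (cases "x = m") auto
    ultimately show ?thesis unfolding permutes_def by blast
  qed
  have "x = (\<lambda>i. (v \<circ> transpose j m) (\<tau> i))" unfolding \<tau>_def s(2) by (simp add: fun_eq_iff)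
  then have "x \<in> orbit m (v \<circ> transpose j m)" unfolding orbit_def using t2 by blast
  moreover have "x m = v j" unfolding s(2) j_def by simp
  ultimately show ?thesis using j by blast
qed


lemma main_bound:
  assumes ob: "orbit_bound m k" and inj: "inj_on v {..<Suc m}"
    and ij: "i < m" "j < m" "b i \<noteq> b j"
  shows "real (card (hyperplane (Suc m) b \<inter> orbit (Suc m) v)) \<le> fact (Suc m) / real k"
proof -
  define B where "B = (\<lambda>l. {x \<in> orbit m (v \<circ> transpose l m). (\<Sum>i<m. b i * x i) = - (b m * v l)})"
  have sub: "hyperplane (Suc m) b \<inter> orbit (Suc m) v \<subseteq> (\<Union>l\<in>{..<Suc m}. B l)"
  proof
    fix x assume x: "x \<in> hyperplane (Suc m) b \<inter> orbit (Suc m) v"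
    then obtain l where l: "l < Suc m" "x \<in> orbit m (v \<circ> transpose l m)" "x m = v l"
      using fiber by blast
    have "(\<Sum>i<Suc m. b i * x i) = 0" using x unfolding hyperplane_def by auto
    then have "(\<Sum>i<m. b i * x i) = - (b m * v l)" using l(3) by simp
    then show "x \<in> (\<Union>l\<in>{..<Suc m}. B l)" unfolding B_def using l by auto
  qed
  have fin: "finite (B l)" for l unfolding B_def using orbit_finite by simp
  have "card (hyperplane (Suc m) b \<inter> orbit (Suc m) v) \<le> card (\<Union>l\<in>{..<Suc m}. B l)"
    by (rule card_mono[OF _ sub]) (simp add: fin)
  also have "\<dots> \<le> (\<Sum>l<Suc m. card (B l))" by (rule card_UN_le) simp
  finally have c: "real (card (hyperplane (Suc m) b \<inter> orbit (Suc m) v)) \<le> (\<Sum>l<Suc m. real (card (B l)))"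
    by (metis of_nat_le_iff of_nat_sum)
  have "real (card (B l)) \<le> fact m / real k" if "l < Suc m" for l
  proof -
    have "inj_on (v \<circ> transpose l m) {..<m}"
    proof (rule comp_inj_on)
      show "inj_on (transpose l m) {..<m}" by (rule inj_on_subset[OF inj_transpose]) simp
      show "inj_on v (transpose l m ` {..<m})"
        by (rule inj_on_subset[OF inj]) (use that in \<open>auto simp: transpose_def\<close>)
    qed
    then show ?thesis unfolding B_def using affine_bound[OF ob _ ij] by blast
  qed
  then have "(\<Sum>l<Suc m. real (card (B l))) \<le> (\<Sum>l<Suc m. fact m / real k)"
    by (intro sum_mono) auto
  also have "\<dots> = fact (Suc m) / real k" by (simp add: fact_Suc)
  finally show ?thesis using c by linarith
qed


lemma trivial_k1: "real (card (hyperplane n a \<inter> orbit n v)) \<le> fact n"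
proof -
  have "card (hyperplane n a \<inter> orbit n v) \<le> card (orbit n v)"
    by (rule card_mono) (auto simp: orbit_finite)
  then show ?thesis using orbit_card[of n v] by (metis of_nat_fact of_nat_le_iff order_trans)
qed

lemma step:
  assumes ob: "orbit_bound m k" and k: "0 < k" "k \<le> m"
  shows "orbit_bound (Suc m) k"
  unfolding orbit_bound_def
proof (intro allI impI, elim conjE)
  fix v a assume adm: "admissible (Suc m) v" and nz: "nonzero_normal (Suc m) a"
  show "real (card (hyperplane (Suc m) a \<inter> orbit (Suc m) v)) \<le> fact (Suc m) / real k"
  proof (cases "\<forall>i<Suc m. a i = a 0")
    case True
    have "hyperplane (Suc m) a \<inter> orbit (Suc m) v = {}"
    proof (rule ccontr)
      assume "hyperplane (Suc m) a \<inter> orbit (Suc m) v \<noteq> {}"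
      then obtain x where x: "x \<in> hyperplane (Suc m) a" "x \<in> orbit (Suc m) v" by blast
      have "(\<Sum>i<Suc m. a i * x i) = (\<Sum>i<Suc m. a 0 * x i)" proof (intro sum.cong refl)
        fix i assume "i \<in> {..<Suc m}" then show "a i * x i = a 0 * x i" using True[rule_format, of i] by simp
      qed
      also have "\<dots> = a 0 * (\<Sum>i<Suc m. v i)" using orbit_sum[OF x(2)] by (simp only: sum_distrib_left[symmetric])
      finally have "a 0 * (\<Sum>i<Suc m. v i) = 0" using x(1) unfolding hyperplane_def by simp
      moreover have "a 0 \<noteq> 0"
      proof -
        obtain i where "i < Suc m" "a i \<noteq> 0" using nz unfolding nonzero_normal_def by blast
        then show ?thesis using True[rule_format, of i] by simp
      qed
      moreover have "(\<Sum>i<Suc m. v i) \<noteq> 0" using adm unfolding admissible_def by blast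
      ultimately show False by simp
    qed
    then show ?thesis by simp
  next
    case False
    then obtain i where i: "i < Suc m" "a i \<noteq> a 0" by blast
    show ?thesis
    proof (cases "k = 1")
      case True
      then show ?thesis using trivial_k1[of "Suc m" a v] by simp
    next
      case False
      then have m2: "m \<ge> 2" using k by linarith
      define p where "p = (if i = 1 then 2 else (1::nat))"
      have p: "p < Suc m" "p \<noteq> i" "p \<noteq> 0" unfolding p_def using m2 by auto
      define \<pi> where "\<pi> = transpose p m"
      have pp: "\<pi> permutes {..<Suc m}" unfolding \<pi>_def by (rule permutes_swap_id) (use p in auto)
      have inj: "inj_on v {..<Suc m}" using adm unfolding admissible_def by blast
      have i1: "\<pi> i < m" unfolding \<pi>_def using p i by (simp add: transpose_def)
      have i2: "\<pi> 0 < m" unfolding \<pi>_def using p i m2 by (simp add: transpose_def)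
      have "(a \<circ> \<pi>) (\<pi> i) \<noteq> (a \<circ> \<pi>) (\<pi> 0)" unfolding \<pi>_def using i by simp
      from main_bound[OF ob inj i1 i2 this]
      have "real (card (hyperplane (Suc m) (a \<circ> \<pi>) \<inter> orbit (Suc m) v)) \<le> fact (Suc m) / real k" .
      moreover have "card (hyperplane (Suc m) a \<inter> orbit (Suc m) v) \<le> card (hyperplane (Suc m) (a \<circ> \<pi>) \<inter> orbit (Suc m) v)"
        by (rule card_perm_normal[OF pp])
      ultimately show ?thesis by (meson of_nat_le_iff order_trans)
    qed
  qed
qed

lemma part1: assumes "0 < k" "k \<le> n" "orbit_bound n k" "m \<ge> n" shows "orbit_bound m k"
  using assms(4)
proof (induction m rule: dec_induct)
  case base then show ?case using assms by simp
next
  case (step m) then show ?case using assms by (intro Submission.step) auto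
qed


lemma fix01: "{\<tau>. \<tau> permutes {..<N} \<and> \<tau> 0 = 0 \<and> \<tau> 1 = 1} = {\<tau>. \<tau> permutes {2..<(N::nat)}}"
proof (intro set_eqI iffI; clarify)
  fix \<tau> assume t: "\<tau> permutes {..<N}" "\<tau> 0 = 0" "\<tau> 1 = 1"
  have "\<forall>y. \<exists>!x. \<tau> x = y" using t(1) unfolding permutes_def by blast
  moreover have "\<tau> x = x" if "x \<notin> {2..<N}" for x
  proof (cases "x < 2")
    case True then have "x = 0 \<or> x = 1" by auto
    then show ?thesis using t by auto
  next
    case False then have "x \<notin> {..<N}" using that by auto
    then show ?thesis using permutes_not_in[OF t(1)] by blast
  qed
  ultimately show "\<tau> permutes {2..<N}" unfolding permutes_def by blast
next
  fix \<tau> assume t: "\<tau> permutes {2..<N}"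
  have "\<tau> permutes {..<N}" by (rule permutes_subset[OF t]) auto
  moreover have "\<tau> 0 = 0" by (rule permutes_not_in[OF t]) auto
  moreover have "\<tau> 1 = 1" by (rule permutes_not_in[OF t]) auto
  ultimately show "\<tau> permutes {..<N} \<and> \<tau> 0 = 0 \<and> \<tau> 1 = 1" by blast
qed

lemma perm2:
  assumes "j \<noteq> j'" "j < N" "j' < N" "2 \<le> N"
  shows "card {\<sigma>. \<sigma> permutes {..<N} \<and> \<sigma> 0 = j \<and> \<sigma> 1 = j'} = fact (N - 2)"
proof -
  define Q where "Q = {\<tau>. \<tau> permutes {..<N} \<and> \<tau> 0 = 0 \<and> \<tau> 1 = 1}"
  have cQ: "card Q = fact (N - 2)" unfolding Q_def fix01 by (simp add: card_permutations)
  define u where "u = transpose 0 j j'"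
  have u0: "u \<noteq> 0" unfolding u_def using assms(1) by (simp add: transpose_def)
  have uN: "u < N" unfolding u_def using assms by (simp add: transpose_def)
  define \<pi> where "\<pi> = transpose 0 j \<circ> transpose 1 u"
  have pp: "\<pi> permutes {..<N}" unfolding \<pi>_def
    by (rule permutes_compose; rule permutes_swap_id) (use assms uN in auto)
  have p0: "\<pi> 0 = j" unfolding \<pi>_def using u0 by (simp add: transpose_def)
  have p1: "\<pi> 1 = j'" unfolding \<pi>_def u_def by simp
  have inj: "inj_on (\<lambda>\<tau>. \<pi> \<circ> \<tau>) Q"
  proof (rule inj_onI)
    fix x y assume "\<pi> \<circ> x = \<pi> \<circ> y"
    then have "\<pi> (x i) = \<pi> (y i)" for i by (metis comp_apply)
    then show "x = y" using permutes_inj[OF pp] by (simp add: fun_eq_iff inj_eq)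
  qed
  have img: "(\<lambda>\<tau>. \<pi> \<circ> \<tau>) ` Q = {\<sigma>. \<sigma> permutes {..<N} \<and> \<sigma> 0 = j \<and> \<sigma> 1 = j'}"
  proof (intro set_eqI iffI)
    fix \<sigma> assume "\<sigma> \<in> (\<lambda>\<tau>. \<pi> \<circ> \<tau>) ` Q"
    then obtain \<tau> where "\<tau> \<in> Q" "\<sigma> = \<pi> \<circ> \<tau>" by blast
    then show "\<sigma> \<in> {\<sigma>. \<sigma> permutes {..<N} \<and> \<sigma> 0 = j \<and> \<sigma> 1 = j'}"
      unfolding Q_def using permutes_compose[OF _ pp] p0 p1 by auto
  next
    fix \<sigma> assume s: "\<sigma> \<in> {\<sigma>. \<sigma> permutes {..<N} \<and> \<sigma> 0 = j \<and> \<sigma> 1 = j'}"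
    define \<tau> where "\<tau> = inv \<pi> \<circ> \<sigma>"
    have "\<tau> permutes {..<N}" unfolding \<tau>_def using s permutes_compose[OF _ permutes_inv[OF pp]] by auto
    moreover have "\<tau> 0 = 0" "\<tau> 1 = 1" unfolding \<tau>_def using s p0 p1 permutes_inverses(2)[OF pp] by auto
    moreover have "\<sigma> = \<pi> \<circ> \<tau>" unfolding \<tau>_def using permutes_inverses(1)[OF pp] by (simp add: fun_eq_iff)
    ultimately show "\<sigma> \<in> (\<lambda>\<tau>. \<pi> \<circ> \<tau>) ` Q" unfolding Q_def by blast
  qed
  show ?thesis using img card_image[OF inj] cQ by simp
qed


lemma sum_first2: "2 \<le> (N::nat) \<Longrightarrow> (\<Sum>i<N. (if i < 2 then 1 else 0) * (x i::real)) = x 0 + x 1"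
proof (induction N rule: dec_induct)
  case base then show ?case by (simp add: numeral_2_eq_2)
next
  case (step m) then show ?case by simp
qed

lemma sum_lin: "(\<Sum>i<N. real i + 1) * 2 = real N * (real N + 1)"
  by (induction N) (simp_all add: algebra_simps)

lemma witness:
  assumes "even N" "4 \<le> N"
  shows "\<exists>v a. admissible N v \<and> nonzero_normal N a \<and> N * fact (N - 2) \<le> card (hyperplane N a \<inter> orbit N v)"
proof -
  define v where "v = (\<lambda>i::nat. real i + 1)"
  define a where "a = (\<lambda>i::nat. (if i < 2 then 1 else 0) - 2 / real N)"
  have Npos: "real N > 0" using assms by simp
  have adm: "admissible N v" unfolding admissible_def v_def
  proof
    show "inj_on (\<lambda>i. real i + 1) {..<N}" by (simp add: inj_on_def)
    have "(\<Sum>i<N. real i + 1) * 2 > 0" unfolding sum_lin using Npos by simp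
    then show "(\<Sum>i<N. real i + 1) \<noteq> 0" by auto
  qed
  have nz: "nonzero_normal N a" unfolding nonzero_normal_def a_def
  proof (rule exI[of _ 0], intro conjI)
    show "0 < N" using assms by simp
    have "2 / real N < 1" using assms by (simp add: field_simps)
    then show "(if (0::nat) < 2 then 1 else 0) - 2 / real N \<noteq> 0" using assms by auto
  qed
  define P where "P = {\<sigma>. \<sigma> permutes {..<N} \<and> \<sigma> 0 + \<sigma> 1 + 1 = N}"
  define PP where "PP = (\<lambda>j. {\<sigma>. \<sigma> permutes {..<N} \<and> \<sigma> 0 = j \<and> \<sigma> 1 = N - 1 - j})"
  have Pun: "P = (\<Union>j\<in>{..<N}. PP j)"
  proof (intro set_eqI iffI)
    fix \<sigma> assume "\<sigma> \<in> P"
    then have s: "\<sigma> permutes {..<N}" "\<sigma> 0 + \<sigma> 1 + 1 = N" unfolding P_def by auto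
    then show "\<sigma> \<in> (\<Union>j\<in>{..<N}. PP j)" unfolding PP_def by (intro UN_I[of "\<sigma> 0"]) auto
  next
    fix \<sigma> assume "\<sigma> \<in> (\<Union>j\<in>{..<N}. PP j)"
    then obtain j where "j < N" "\<sigma> permutes {..<N}" "\<sigma> 0 = j" "\<sigma> 1 = N - 1 - j" unfolding PP_def by auto
    then show "\<sigma> \<in> P" unfolding P_def by auto
  qed
  have cPP: "card (PP j) = fact (N - 2)" if "j < N" for j
  proof -
    have "j \<noteq> N - 1 - j" using assms that by presburger
    then show ?thesis unfolding PP_def using perm2[of j "N - 1 - j" N] that assms by simp
  qed
  have "card P = (\<Sum>j<N. card (PP j))" unfolding Pun
    by (rule card_UN_disjoint) (auto simp: PP_def finite_permutations)
  also have "\<dots> = N * fact (N - 2)" using cPP by simp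
  finally have cP: "card P = N * fact (N - 2)" .
  define f where "f = (\<lambda>(\<sigma>::nat\<Rightarrow>nat) (i::nat). v (\<sigma> i))"
  have injf: "inj_on f P"
  proof (rule inj_onI)
    fix x y assume "f x = f y"
    then have "v (x i) = v (y i)" for i unfolding f_def by metis
    then show "x = y" unfolding v_def by (simp add: fun_eq_iff)
  qed
  have sv: "(\<Sum>i<N. v i) = real N * (real N + 1) / 2" using sum_lin[of N] unfolding v_def by simp
  have sub: "f ` P \<subseteq> hyperplane N a \<inter> orbit N v"
  proof (rule image_subsetI)
    fix \<sigma> assume "\<sigma> \<in> P"
    then have s: "\<sigma> permutes {..<N}" "\<sigma> 0 + \<sigma> 1 + 1 = N" unfolding P_def by auto
    have o: "f \<sigma> \<in> orbit N v" unfolding f_def orbit_def using s by auto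
    have "(\<Sum>i<N. a i * f \<sigma> i) = (\<Sum>i<N. (if i < 2 then 1 else 0) * f \<sigma> i) - 2 / real N * (\<Sum>i<N. f \<sigma> i)"
      unfolding a_def by (simp add: algebra_simps sum_subtractf sum_distrib_left sum_divide_distrib)
    also have "\<dots> = f \<sigma> 0 + f \<sigma> 1 - 2 / real N * (real N * (real N + 1) / 2)"
      using sum_first2[of N "f \<sigma>"] orbit_sum[OF o] sv assms Npos by (simp add: field_simps)
    also have "\<dots> = real (\<sigma> 0 + \<sigma> 1 + 1) + 1 - (real N + 1)" unfolding f_def v_def using Npos by (simp add: field_simps)
    also have "\<dots> = 0" using s(2) by simp
    finally show "f \<sigma> \<in> hyperplane N a \<inter> orbit N v" using o unfolding hyperplane_def by simp
  qed
  have "card P = card (f ` P)" using card_image[OF injf] by simp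
  also have "\<dots> \<le> card (hyperplane N a \<inter> orbit N v)"
    by (rule card_mono[OF _ sub]) (simp add: orbit_finite)
  finally show ?thesis using adm nz cP by auto
qed


lemma hitset_finite: "finite {card (hyperplane n a \<inter> orbit n v) | v a. admissible n v \<and> nonzero_normal n a}"
proof (rule finite_subset[of _ "{..fact n}"])
  show "{card (hyperplane n a \<inter> orbit n v) | v a. admissible n v \<and> nonzero_normal n a} \<subseteq> {..fact n}"
  proof -
    have "card (hyperplane n a \<inter> orbit n v) \<le> fact n" for v a
    proof -
      have "card (hyperplane n a \<inter> orbit n v) \<le> card (orbit n v)"
        by (rule card_mono) (auto simp: orbit_finite)
      then show ?thesis using orbit_card[of n v] by simp
    qed
    then show ?thesis by auto
  qed
qed simp

lemma fact_rel: "0 < n \<Longrightarrow> (fact n :: real) / real n = real (fact (n - 1))"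
  by (cases n) (simp_all add: field_simps)

theorem proposition1p7:
  shows "(\<forall>n k. 0 < k \<and> k \<le> n \<and> orbit_bound n k \<longrightarrow> (\<forall>m\<ge>n. orbit_bound m k))
    \<and> (\<forall>n. 3 \<le> n \<and> odd n \<and> max_hit n = fact (n - 1)
          \<longrightarrow> max_hit (n + 1) = (n + 1) * fact (n - 1))"
proof (intro conjI)
  show "\<forall>n k. 0 < k \<and> k \<le> n \<and> orbit_bound n k \<longrightarrow> (\<forall>m\<ge>n. orbit_bound m k)"
    using part1 by blast
next
  show "\<forall>n. 3 \<le> n \<and> odd n \<and> max_hit n = fact (n - 1)
          \<longrightarrow> max_hit (n + 1) = (n + 1) * fact (n - 1)"
  proof (intro allI impI)
  fix n :: nat assume hh: "3 \<le> n \<and> odd n \<and> max_hit n = fact (n - 1)"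
  then have n3: "3 \<le> n" and od: "odd n" and mh: "max_hit n = fact (n - 1)" by auto
  have obn: "orbit_bound n n" unfolding orbit_bound_def
  proof (intro allI impI)
    fix v a assume h: "admissible n v \<and> nonzero_normal n a"
    have "card (hyperplane n a \<inter> orbit n v) \<le> max_hit n" unfolding max_hit_def
      by (rule Max_ge[OF hitset_finite]) (use h in blast)
    then have "real (card (hyperplane n a \<inter> orbit n v)) \<le> real (fact (n - 1))" using mh by (metis of_nat_le_iff)
    then show "real (card (hyperplane n a \<inter> orbit n v)) \<le> fact n / real n" using fact_rel[of n] n3 by simp
  qed
  have ob1: "orbit_bound (n + 1) n" using part1[OF _ _ obn, of "n + 1"] n3 by simp
  have rel: "(fact (n + 1) :: real) / real n = real ((n + 1) * fact (n - 1))"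
    using fact_rel[of n] n3 by (simp add: fact_Suc field_simps)
  obtain v a where w: "admissible (n + 1) v" "nonzero_normal (n + 1) a"
    "(n + 1) * fact (n + 1 - 2) \<le> card (hyperplane (n + 1) a \<inter> orbit (n + 1) v)"
    using witness[of "n + 1"] od n3 by auto
  let ?S = "{card (hyperplane (n + 1) a \<inter> orbit (n + 1) v) | v a. admissible (n + 1) v \<and> nonzero_normal (n + 1) a}"
  have le: "x \<le> (n + 1) * fact (n - 1)" if xS: "x \<in> ?S" for x
  proof -
    obtain v a where "x = card (hyperplane (n + 1) a \<inter> orbit (n + 1) v)" "admissible (n + 1) v" "nonzero_normal (n + 1) a"
      using xS by blast
    then have "real x \<le> fact (n + 1) / real n" using ob1 unfolding orbit_bound_def by blast
    then show ?thesis unfolding rel by linarith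
  qed
  have mem: "card (hyperplane (n + 1) a \<inter> orbit (n + 1) v) \<in> ?S" using w by blast
  have "max_hit (n + 1) \<le> (n + 1) * fact (n - 1)" unfolding max_hit_def
    using le mem hitset_finite by (subst Max_le_iff) auto
  moreover have "(n + 1) * fact (n - 1) \<le> max_hit (n + 1)" unfolding max_hit_def
  proof -
    have "(n + 1) * fact (n - 1) \<le> card (hyperplane (n + 1) a \<inter> orbit (n + 1) v)" using w(3) by simp
    also have "\<dots> \<le> Max ?S" by (rule Max_ge[OF hitset_finite mem])
    finally show "(n + 1) * fact (n - 1) \<le> Max ?S" .
  qed
  ultimately show "max_hit (n + 1) = (n + 1) * fact (n - 1)" by simp
  qed
qed

end
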